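(* Let $(\Gamma,\omega,\Phi)$ be a classical Poincaré-invariant system with timelike future-directed four-momentum $P$, and let $\chi$ be a position observable for it. Then $\chi$ is a centre of spin position observable if and only if, for every $(u,\tau)\in\mathsf{SpHP}$ and every $\gamma\in\Gamma$, $$u^\flat\wedge P^\flat\wedge\big(\iota_{u+\frac{P}{mc}}S(u)\big)=0,$$ where $S(u)_{\mu\nu}=J_{\mu\nu}-\chi_\mu(u,\tau)P_\nu+\chi_\nu(u,\tau)P_\mu$ and $\iota_v S$ denotes the one-form $S(v,\cdot)$.
   Context: Minkowski spacetime: affine space $M$ over a 4-dimensional real vector space $V$ with metric $\eta$ of signature $(-,+,+,+)$, fixed orientation and time orientation, fixed origin identifying $M$ with $V$. $u\cdot v:=\eta(u,v)$, $v^\flat=\eta(v,\cdot)$, indices lowered/raised with $\eta$; $\varepsilon$ is the volume form with $\varepsilon_{0123}=+1$ in positively oriented orthonormal bases; $c>0$. $\mathsf{SpHP}$ is the set of spacelike hyperplanes, each identified with $(u,\tau)$, $u$ future-directed unit timelike normal, $\Sigma=\{x:u\cdot x=-\tau\}$. A classical Poincaré-invariant system has phase-space functions $P_\mu$ (four-momentum) and $J_{\mu\nu}=-J_{\nu\mu}$ (angular momentum about the origin); $m=\sqrt{-P\cdot P}/c$. A position observable is a map $\chi\colon\mathsf{SpHP}\times\Gamma\to M$ with $u_\mu\chi^\mu(u,\tau)=-\tau$ and $\partial\chi_\mu(u,\tau)/\partial\tau=P_\mu/(-u\cdot P)$; its spin tensor is $S(u)_{\mu\nu}=J_{\mu\nu}-\chi_\mu(u,\tau)P_\nu+\chi_\nu(u,\tau)P_\mu$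 (independent of $\tau$). The Pauli–Lubański vector is $W_\mu=-\tfrac12\varepsilon_{\mu\nu\rho\sigma}P^\nu J^{\rho\sigma}$. The spin vector in the frame $u$ is $s(u)=B(u)\,W/(mc)$, where $B(u)$ is the boost $B^\mu{}_\nu(u)=\delta^\mu_\nu+\frac{(P^\mu/(mc)+u^\mu)(P_\nu/(mc)+u_\nu)}{1-u\cdot P/(mc)}-2\frac{u^\mu P_\nu}{mc}$ mapping $P/(mc)$ to $u$. A position observable $\chi$ is a centre of spin if $s_\mu(u)=-\tfrac12\varepsilon_{\mu\nu\rho\sigma}u^\nu S^{\rho\sigma}(u)$ for all $(u,\tau)$ and all phase-space points. *)

theory Defs
  imports "HOL-Analysis.Analysis"
begin

text \<open>Minkowski spacetime in a fixed positively oriented, time-oriented orthonormal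
basis: V = real^4, indices of type 4 (0 = time), eta = diag(-1,1,1,1).
Vectors are stored by their contravariant components v^mu; two-index tensors
J, S by their covariant components T_{mu nu} (T $ mu $ nu).\<close>

definition eta :: "4 \<Rightarrow> real" where
  "eta i = (if i = 0 then -1 else 1)"

definition mdot :: "real^4 \<Rightarrow> real^4 \<Rightarrow> real" where
  "mdot u v = (\<Sum>i\<in>UNIV. eta i * u$i * v$i)"

text \<open>lowering / raising indices (eta is diagonal and its own inverse)\<close>
definition flat :: "real^4 \<Rightarrow> real^4" where
  "flat v = (\<chi> i. eta i * v$i)"

definition raise2 :: "real^4^4 \<Rightarrow> real^4^4" where
  "raise2 T = (\<chi> i j. eta i * eta j * T$i$j)"

definition idx :: "4 \<Rightarrow> int" where
  "idx i = (if i = 0 then 0 else if i = 1 then 1 else if i = 2 then 2 else 3)"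

text \<open>Levi-Civita symbol, eps 0 1 2 3 = 1\<close>
definition eps :: "4 \<Rightarrow> 4 \<Rightarrow> 4 \<Rightarrow> 4 \<Rightarrow> real" where
  "eps a b c d = real_of_int
     (sgn (idx b - idx a) * sgn (idx c - idx a) * sgn (idx d - idx a) *
      sgn (idx c - idx b) * sgn (idx d - idx b) * sgn (idx d - idx c))"

definition future_timelike :: "real^4 \<Rightarrow> bool" where
  "future_timelike v \<longleftrightarrow> mdot v v < 0 \<and> v$0 > 0"

definition SpHP :: "((real^4) \<times> real) set" where
  "SpHP = {(u,\<tau>). mdot u u = -1 \<and> u$0 > 0}"

definition mass :: "real \<Rightarrow> real^4 \<Rightarrow> real" where
  "mass c p = sqrt (- mdot p p) / c"

definition PL :: "real^4 \<Rightarrow> real^4^4 \<Rightarrow> real^4" where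
  "PL p J = (\<chi> \<mu>. - (1/2) * (\<Sum>\<nu>\<in>UNIV. \<Sum>\<rho>\<in>UNIV. \<Sum>\<sigma>\<in>UNIV.
       eps \<mu> \<nu> \<rho> \<sigma> * p$\<nu> * (raise2 J)$\<rho>$\<sigma>))"

text \<open>boost B(u)^mu_nu mapping P/(mc) to u\<close>
definition boost :: "real \<Rightarrow> real^4 \<Rightarrow> real^4 \<Rightarrow> real^4^4" where
  "boost c p u = (let mc = mass c p * c in
     (\<chi> \<mu> \<nu>. (if \<mu> = \<nu> then 1 else 0)
       + (p$\<mu>/mc + u$\<mu>) * ((flat p)$\<nu>/mc + (flat u)$\<nu>) / (1 - mdot u p / mc)
       - 2 * u$\<mu> * (flat p)$\<nu> / mc))"

text \<open>spin vector s(u) = B(u) W / (mc), contravariant components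
  (W^nu obtained by raising the index of the covector W_nu)\<close>
definition spin_vec :: "real \<Rightarrow> real^4 \<Rightarrow> real^4^4 \<Rightarrow> real^4 \<Rightarrow> real^4" where
  "spin_vec c p J u = (\<chi> \<mu>. (\<Sum>\<nu>\<in>UNIV. (boost c p u)$\<mu>$\<nu> * (flat (PL p J))$\<nu>)
                             / (mass c p * c))"

definition spin_tensor :: "real^4^4 \<Rightarrow> real^4 \<Rightarrow> real^4 \<Rightarrow> real^4^4" where
  "spin_tensor J p x = (\<chi> \<mu> \<nu>. J$\<mu>$\<nu> - (flat x)$\<mu> * (flat p)$\<nu> + (flat x)$\<nu> * (flat p)$\<mu>)"

text \<open>Position observable: chi u tau g is the point of the hyperplane (u,tau) for the
phase-space point g.\<close>
definition position_observable ::
  "('g \<Rightarrow> real^4) \<Rightarrow> (real^4 \<Rightarrow> real \<Rightarrow> 'g \<Rightarrow> real^4) \<Rightarrow> bool" where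
  "position_observable P \<chi>' \<longleftrightarrow>
     (\<forall>u \<tau> g. (u,\<tau>) \<in> SpHP \<longrightarrow>
        mdot u (\<chi>' u \<tau> g) = - \<tau> \<and>
        ((\<lambda>t. \<chi>' u t g) has_vector_derivative ((1 / (- mdot u (P g))) *\<^sub>R P g)) (at \<tau>))"

definition centre_of_spin ::
  "real \<Rightarrow> ('g \<Rightarrow> real^4) \<Rightarrow> ('g \<Rightarrow> real^4^4) \<Rightarrow> (real^4 \<Rightarrow> real \<Rightarrow> 'g \<Rightarrow> real^4) \<Rightarrow> bool" where
  "centre_of_spin c P J \<chi>' \<longleftrightarrow>
     (\<forall>u \<tau> g. (u,\<tau>) \<in> SpHP \<longrightarrow>
        (\<forall>\<mu>. (flat (spin_vec c (P g) (J g) u))$\<mu> =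
           - (1/2) * (\<Sum>\<nu>\<in>UNIV. \<Sum>\<rho>\<in>UNIV. \<Sum>\<sigma>\<in>UNIV.
               eps \<mu> \<nu> \<rho> \<sigma> * u$\<nu> *
               (raise2 (spin_tensor (J g) (P g) (\<chi>' u \<tau> g)))$\<rho>$\<sigma>)))"

definition iota_contr :: "real^4 \<Rightarrow> real^4^4 \<Rightarrow> real^4" where
  "iota_contr v S = (\<chi> \<nu>. \<Sum>\<mu>\<in>UNIV. v$\<mu> * S$\<mu>$\<nu>)"

definition wedge3 :: "real^4 \<Rightarrow> real^4 \<Rightarrow> real^4 \<Rightarrow> 4 \<Rightarrow> 4 \<Rightarrow> 4 \<Rightarrow> real" where
  "wedge3 a b c i j k =
     a$i*b$j*c$k - a$i*b$k*c$j + a$j*b$k*c$i - a$j*b$i*c$k + a$k*b$i*c$j - a$k*b$j*c$i"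

end

theory Submission imports Defs begin
lemma four_ne: "(0::4) \<noteq> 1" "(0::4) \<noteq> 2" "(0::4) \<noteq> 3" "(1::4) \<noteq> 2" "(1::4) \<noteq> 3" "(2::4) \<noteq> 3"
  "(1::4) \<noteq> 0" "(2::4) \<noteq> 0" "(3::4) \<noteq> 0" "(2::4) \<noteq> 1" "(3::4) \<noteq> 1" "(3::4) \<noteq> 2"
  by simp_all
lemma ex4: "(i::4) = 0 \<or> i = 1 \<or> i = 2 \<or> i = 3"
  using exhaust_4[of i] by auto
lemma sum4: "sum f (UNIV::4 set) = f 0 + f 1 + f 2 + f 3"
proof -
  have "UNIV = {0,1,2,3::4}" using ex4 by auto
  hence "sum f UNIV = sum f {0,1,2,3::4}" by simp
  also have "\<dots> = f 0 + f 1 + f 2 + f 3" by (simp add: four_ne ac_simps)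
  finally show ?thesis .
qed
lemma idx_simps: "idx 0 = 0" "idx 1 = 1" "idx 2 = 2" "idx 3 = 3" by (simp_all add: idx_def four_ne)

definition hdual :: "real^4 \<Rightarrow> real^4^4 \<Rightarrow> real^4" where
  "hdual v S = (\<chi> \<mu>. - (1/2) * (\<Sum>\<nu>\<in>UNIV. \<Sum>\<rho>\<in>UNIV. \<Sum>\<sigma>\<in>UNIV.
       eps \<mu> \<nu> \<rho> \<sigma> * v$\<nu> * (raise2 S)$\<rho>$\<sigma>))"

lemma antis:
  fixes J :: "real^4^4"
  assumes as: "\<And>\<mu> \<nu>. J $ \<mu> $ \<nu> = - (J $ \<nu> $ \<mu>)"
  shows "J$1$0 = - J$0$1" "J$2$0 = - J$0$2" "J$3$0 = - J$0$3" "J$2$1 = - J$1$2" "J$3$1 = - J$1$3" "J$3$2 = - J$2$3"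
    "J$0$0 = 0" "J$1$1 = 0" "J$2$2 = 0" "J$3$3 = 0"
  using as by (metis add.inverse_inverse neg_equal_zero)+

lemma pureA0:
  fixes u P x :: "real^4" and J :: "real^4^4"
  assumes as: "\<And>\<mu> \<nu>. J $ \<mu> $ \<nu> = - (J $ \<nu> $ \<mu>)"
  shows "wedge3 (flat u) (flat P) (iota_contr P (spin_tensor J P x)) 1 2 3 =
    (1) * (mdot u P * PL P J $ 0 - eta 0 * P$0 * (\<Sum>\<nu>\<in>UNIV. u$\<nu> * PL P J $\<nu>) - mdot P P * hdual u (spin_tensor J P x) $ 0)"
  apply (simp add: wedge3_def iota_contr_def spin_tensor_def flat_def raise2_def PL_def hdual_def mdot_def sum4 eps_def idx_simps eta_def four_ne antis[OF as])
  apply algebra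
  done

lemma pureB0:
  fixes u P x :: "real^4" and J :: "real^4^4"
  assumes as: "\<And>\<mu> \<nu>. J $ \<mu> $ \<nu> = - (J $ \<nu> $ \<mu>)"
  shows "wedge3 (flat u) (flat P) (iota_contr u (spin_tensor J P x)) 1 2 3 =
    (1) * (mdot u u * PL P J $ 0 - mdot u P * hdual u (spin_tensor J P x) $ 0 - eta 0 * u$0 * (\<Sum>\<nu>\<in>UNIV. u$\<nu> * PL P J $\<nu>))"
  apply (simp add: wedge3_def iota_contr_def spin_tensor_def flat_def raise2_def PL_def hdual_def mdot_def sum4 eps_def idx_simps eta_def four_ne antis[OF as])
  apply algebra
  done

lemma pureA1:
  fixes u P x :: "real^4" and J :: "real^4^4"
  assumes as: "\<And>\<mu> \<nu>. J $ \<mu> $ \<nu> = - (J $ \<nu> $ \<mu>)"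
  shows "wedge3 (flat u) (flat P) (iota_contr P (spin_tensor J P x)) 0 2 3 =
    (1) * (mdot u P * PL P J $ 1 - eta 1 * P$1 * (\<Sum>\<nu>\<in>UNIV. u$\<nu> * PL P J $\<nu>) - mdot P P * hdual u (spin_tensor J P x) $ 1)"
  apply (simp add: wedge3_def iota_contr_def spin_tensor_def flat_def raise2_def PL_def hdual_def mdot_def sum4 eps_def idx_simps eta_def four_ne antis[OF as])
  apply algebra
  done

lemma pureB1:
  fixes u P x :: "real^4" and J :: "real^4^4"
  assumes as: "\<And>\<mu> \<nu>. J $ \<mu> $ \<nu> = - (J $ \<nu> $ \<mu>)"
  shows "wedge3 (flat u) (flat P) (iota_contr u (spin_tensor J P x)) 0 2 3 =
    (1) * (mdot u u * PL P J $ 1 - mdot u P * hdual u (spin_tensor J P x) $ 1 - eta 1 * u$1 * (\<Sum>\<nu>\<in>UNIV. u$\<nu> * PL P J $\<nu>))"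
  apply (simp add: wedge3_def iota_contr_def spin_tensor_def flat_def raise2_def PL_def hdual_def mdot_def sum4 eps_def idx_simps eta_def four_ne antis[OF as])
  apply algebra
  done

lemma pureA2:
  fixes u P x :: "real^4" and J :: "real^4^4"
  assumes as: "\<And>\<mu> \<nu>. J $ \<mu> $ \<nu> = - (J $ \<nu> $ \<mu>)"
  shows "wedge3 (flat u) (flat P) (iota_contr P (spin_tensor J P x)) 0 1 3 =
    (-1) * (mdot u P * PL P J $ 2 - eta 2 * P$2 * (\<Sum>\<nu>\<in>UNIV. u$\<nu> * PL P J $\<nu>) - mdot P P * hdual u (spin_tensor J P x) $ 2)"
  apply (simp add: wedge3_def iota_contr_def spin_tensor_def flat_def raise2_def PL_def hdual_def mdot_def sum4 eps_def idx_simps eta_def four_ne antis[OF as])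
  apply algebra
  done

lemma pureB2:
  fixes u P x :: "real^4" and J :: "real^4^4"
  assumes as: "\<And>\<mu> \<nu>. J $ \<mu> $ \<nu> = - (J $ \<nu> $ \<mu>)"
  shows "wedge3 (flat u) (flat P) (iota_contr u (spin_tensor J P x)) 0 1 3 =
    (-1) * (mdot u u * PL P J $ 2 - mdot u P * hdual u (spin_tensor J P x) $ 2 - eta 2 * u$2 * (\<Sum>\<nu>\<in>UNIV. u$\<nu> * PL P J $\<nu>))"
  apply (simp add: wedge3_def iota_contr_def spin_tensor_def flat_def raise2_def PL_def hdual_def mdot_def sum4 eps_def idx_simps eta_def four_ne antis[OF as])
  apply algebra
  done

lemma pureA3:
  fixes u P x :: "real^4" and J :: "real^4^4"
  assumes as: "\<And>\<mu> \<nu>. J $ \<mu> $ \<nu> = - (J $ \<nu> $ \<mu>)"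
  shows "wedge3 (flat u) (flat P) (iota_contr P (spin_tensor J P x)) 0 1 2 =
    (1) * (mdot u P * PL P J $ 3 - eta 3 * P$3 * (\<Sum>\<nu>\<in>UNIV. u$\<nu> * PL P J $\<nu>) - mdot P P * hdual u (spin_tensor J P x) $ 3)"
  apply (simp add: wedge3_def iota_contr_def spin_tensor_def flat_def raise2_def PL_def hdual_def mdot_def sum4 eps_def idx_simps eta_def four_ne antis[OF as])
  apply algebra
  done

lemma pureB3:
  fixes u P x :: "real^4" and J :: "real^4^4"
  assumes as: "\<And>\<mu> \<nu>. J $ \<mu> $ \<nu> = - (J $ \<nu> $ \<mu>)"
  shows "wedge3 (flat u) (flat P) (iota_contr u (spin_tensor J P x)) 0 1 2 =
    (1) * (mdot u u * PL P J $ 3 - mdot u P * hdual u (spin_tensor J P x) $ 3 - eta 3 * u$3 * (\<Sum>\<nu>\<in>UNIV. u$\<nu> * PL P J $\<nu>))"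
  apply (simp add: wedge3_def iota_contr_def spin_tensor_def flat_def raise2_def PL_def hdual_def mdot_def sum4 eps_def idx_simps eta_def four_ne antis[OF as])
  apply algebra
  done

lemma wperm:
  shows "wedge3 a b c 0 0 0 = 0"
    "wedge3 a b c 0 0 1 = 0"
    "wedge3 a b c 0 0 2 = 0"
    "wedge3 a b c 0 0 3 = 0"
    "wedge3 a b c 0 1 0 = 0"
    "wedge3 a b c 0 1 1 = 0"
    "wedge3 a b c 0 2 0 = 0"
    "wedge3 a b c 0 2 1 = - wedge3 a b c 0 1 2"
    "wedge3 a b c 0 2 2 = 0"
    "wedge3 a b c 0 3 0 = 0"
    "wedge3 a b c 0 3 1 = - wedge3 a b c 0 1 3"
    "wedge3 a b c 0 3 2 = - wedge3 a b c 0 2 3"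
    "wedge3 a b c 0 3 3 = 0"
    "wedge3 a b c 1 0 0 = 0"
    "wedge3 a b c 1 0 1 = 0"
    "wedge3 a b c 1 0 2 = - wedge3 a b c 0 1 2"
    "wedge3 a b c 1 0 3 = - wedge3 a b c 0 1 3"
    "wedge3 a b c 1 1 0 = 0"
    "wedge3 a b c 1 1 1 = 0"
    "wedge3 a b c 1 1 2 = 0"
    "wedge3 a b c 1 1 3 = 0"
    "wedge3 a b c 1 2 0 =  wedge3 a b c 0 1 2"
    "wedge3 a b c 1 2 1 = 0"
    "wedge3 a b c 1 2 2 = 0"
    "wedge3 a b c 1 3 0 =  wedge3 a b c 0 1 3"
    "wedge3 a b c 1 3 1 = 0"
    "wedge3 a b c 1 3 2 = - wedge3 a b c 1 2 3"
    "wedge3 a b c 1 3 3 = 0"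
    "wedge3 a b c 2 0 0 = 0"
    "wedge3 a b c 2 0 1 =  wedge3 a b c 0 1 2"
    "wedge3 a b c 2 0 2 = 0"
    "wedge3 a b c 2 0 3 = - wedge3 a b c 0 2 3"
    "wedge3 a b c 2 1 0 = - wedge3 a b c 0 1 2"
    "wedge3 a b c 2 1 1 = 0"
    "wedge3 a b c 2 1 2 = 0"
    "wedge3 a b c 2 1 3 = - wedge3 a b c 1 2 3"
    "wedge3 a b c 2 2 0 = 0"
    "wedge3 a b c 2 2 1 = 0"
    "wedge3 a b c 2 2 2 = 0"
    "wedge3 a b c 2 2 3 = 0"
    "wedge3 a b c 2 3 0 =  wedge3 a b c 0 2 3"
    "wedge3 a b c 2 3 1 =  wedge3 a b c 1 2 3"
    "wedge3 a b c 2 3 2 = 0"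
    "wedge3 a b c 2 3 3 = 0"
    "wedge3 a b c 3 0 0 = 0"
    "wedge3 a b c 3 0 1 =  wedge3 a b c 0 1 3"
    "wedge3 a b c 3 0 2 =  wedge3 a b c 0 2 3"
    "wedge3 a b c 3 0 3 = 0"
    "wedge3 a b c 3 1 0 = - wedge3 a b c 0 1 3"
    "wedge3 a b c 3 1 1 = 0"
    "wedge3 a b c 3 1 2 =  wedge3 a b c 1 2 3"
    "wedge3 a b c 3 1 3 = 0"
    "wedge3 a b c 3 2 0 = - wedge3 a b c 0 2 3"
    "wedge3 a b c 3 2 1 = - wedge3 a b c 1 2 3"
    "wedge3 a b c 3 2 2 = 0"
    "wedge3 a b c 3 2 3 = 0"
    "wedge3 a b c 3 3 0 = 0"
    "wedge3 a b c 3 3 1 = 0"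
    "wedge3 a b c 3 3 2 = 0"
    "wedge3 a b c 3 3 3 = 0"
  unfolding wedge3_def by (simp_all add: algebra_simps)


lemma wedge_all:
  "(\<forall>i j k. wedge3 a b c i j k = 0) \<longleftrightarrow>
   (wedge3 a b c 1 2 3 = 0 \<and> wedge3 a b c 0 2 3 = 0 \<and> wedge3 a b c 0 1 3 = 0 \<and> wedge3 a b c 0 1 2 = 0)"
proof
  assume "\<forall>i j k. wedge3 a b c i j k = 0" thus "wedge3 a b c 1 2 3 = 0 \<and> wedge3 a b c 0 2 3 = 0 \<and> wedge3 a b c 0 1 3 = 0 \<and> wedge3 a b c 0 1 2 = 0" by blast
next
  assume h: "wedge3 a b c 1 2 3 = 0 \<and> wedge3 a b c 0 2 3 = 0 \<and> wedge3 a b c 0 1 3 = 0 \<and> wedge3 a b c 0 1 2 = 0"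
  show "\<forall>i j k. wedge3 a b c i j k = 0"
  proof (intro allI)
    fix i j k :: 4
    show "wedge3 a b c i j k = 0"
      using ex4[of i] ex4[of j] ex4[of k] h by (auto simp: wperm)
  qed
qed

lemma forall4: "(\<forall>i::4. Q i) \<longleftrightarrow> Q 0 \<and> Q 1 \<and> Q 2 \<and> Q 3"
  using ex4 by metis

lemma sv0:
  fixes u P W :: "real^4"
  assumes Mdef: "mass c P * c = M" and M0: "M \<noteq> 0" and nz: "M - mdot u P \<noteq> 0"
    and PW: "(\<Sum>\<nu>\<in>UNIV. P$\<nu> * W $\<nu>) = 0"
  shows "eta m * ((\<Sum>\<nu>\<in>UNIV. boost c P u $ m $ \<nu> * flat W $ \<nu>) / (mass c P * c)) =
     (W $ m + eta m * (P$m + M*u$m) * (\<Sum>\<nu>\<in>UNIV. u$\<nu> * W $\<nu>) / (M - mdot u P)) / M"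
proof -
  have d: "1 - mdot u P / M = (M - mdot u P)/M" using M0 by (simp add: field_simps)
  have ee: "\<And>i. eta i * eta i = 1" by (simp add: eta_def)
  define K where "K = (P$m/M + u$m) * M / (M - mdot u P)"
  have e: "\<And>\<nu>. boost c P u $ m $ \<nu> * flat W $ \<nu> = (if m = \<nu> then flat W $ \<nu> else 0)
      + K * (P$\<nu> * W$\<nu> / M + u$\<nu> * W$\<nu>)
      - 2 * u$m * (P$\<nu> * W$\<nu>) / M"
  proof -
    fix \<nu>
    have "boost c P u $ m $ \<nu> * flat W $ \<nu> = ((if m = \<nu> then 1 else 0)
       + (P$m/M + u$m) * (eta \<nu> * P$\<nu>/M + eta \<nu> * u$\<nu>) / ((M - mdot u P)/M)
       - 2 * u$m * (eta \<nu> * P$\<nu>) / M) * (eta \<nu> * W$\<nu>)"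
      by (simp add: boost_def Let_def Mdef d flat_def)
    also have "\<dots> = (if m = \<nu> then flat W $ \<nu> else 0)
      + (P$m/M + u$m) * M / (M - mdot u P) * ((eta \<nu> * eta \<nu>) * P$\<nu> * W$\<nu> / M + (eta \<nu> * eta \<nu>) * u$\<nu> * W$\<nu>)
      - 2 * u$m * ((eta \<nu> * eta \<nu>) *P$\<nu> * W$\<nu>) / M"
      using M0 nz by (simp add: flat_def field_simps)
    finally show "boost c P u $ m $ \<nu> * flat W $ \<nu> = (if m = \<nu> then flat W $ \<nu> else 0)
      + K * (P$\<nu> * W$\<nu> / M + u$\<nu> * W$\<nu>)
      - 2 * u$m * (P$\<nu> * W$\<nu>) / M" by (simp add: ee K_def)
  qed
  have "(\<Sum>\<nu>\<in>UNIV. boost c P u $ m $ \<nu> * flat W $ \<nu>) =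
     flat W $ m + K * ((\<Sum>\<nu>\<in>UNIV. P$\<nu> * W $\<nu>) / M + (\<Sum>\<nu>\<in>UNIV. u$\<nu> * W $\<nu>))
      - 2 * u$m * (\<Sum>\<nu>\<in>UNIV. P$\<nu> * W $\<nu>) / M"
    unfolding e by (simp add: sum.distrib sum_subtractf sum_distrib_left[symmetric] sum_divide_distrib[symmetric] distrib_left)
  also have "\<dots> = flat W $ m + (P$m/M + u$m) * M / (M - mdot u P) * (\<Sum>\<nu>\<in>UNIV. u$\<nu> * W $\<nu>)"
    using PW by (simp add: K_def)
  finally have s: "(\<Sum>\<nu>\<in>UNIV. boost c P u $ m $ \<nu> * flat W $ \<nu>) = flat W $ m + (P$m/M + u$m) * M / (M - mdot u P) * (\<Sum>\<nu>\<in>UNIV. u$\<nu> * W $\<nu>)" .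
  have fW: "eta m * flat W $ m = W $ m" using ee[of m] by (simp add: flat_def)
  show ?thesis unfolding s Mdef using M0 nz fW
    apply (simp add: field_simps)
    apply algebra
    done
qed


lemma PW:
  fixes P :: "real^4" and J :: "real^4^4"
  shows "(\<Sum>\<nu>\<in>UNIV. P$\<nu> * PL P J $\<nu>) = 0"
  apply (simp add: PL_def raise2_def sum4 eps_def idx_simps eta_def four_ne)
  apply algebra
  done

lemma lin:
  fixes a b u P :: "real^4" and S :: "real^4^4"
  shows "wedge3 a b (iota_contr (u + t *\<^sub>R P) S) i j k = wedge3 a b (iota_contr u S) i j k + t * wedge3 a b (iota_contr P S) i j k"
proof -
  have "iota_contr (u + t *\<^sub>R P) S = iota_contr u S + t *\<^sub>R iota_contr P S"
    by (simp add: iota_contr_def vec_eq_iff sum.distrib sum_distrib_left algebra_simps)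
  thus ?thesis by (simp add: wedge3_def algebra_simps)
qed

lemma fin:
  fixes X1 X2 W b uW uu uP PP M F s etam Pm um :: real
  assumes h1: "X1 = s*(uu*W - uP*b - etam*um*uW)" and h2: "X2 = s*(uP*W - etam*Pm*uW - PP*b)"
   and h3: "F = (W + etam*(Pm + M*um)*uW/(M - uP))/M" and h4: "uu = -1" and h5: "PP = - (M * M)"
   and M0: "M\<noteq>0" and nz: "M - uP \<noteq> 0" and s0: "s\<noteq>0"
  shows "X1 + (1/M)*X2 = 0 \<longleftrightarrow> F - b = 0"
proof -
  have "X1 + (1/M)*X2 = -s*(M-uP)*(F-b)"
    unfolding h1 h2 h3 h4 h5 using M0 nz by (simp add: field_simps power2_eq_square)
  thus ?thesis using s0 nz by simp
qed

lemma cs3: "((a1::real)*b1 + a2*b2 + a3*b3)^2 \<le> (a1^2+a2^2+a3^2)*(b1^2+b2^2+b3^2)"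
proof -
  have "(a1^2+a2^2+a3^2)*(b1^2+b2^2+b3^2) - (a1*b1 + a2*b2 + a3*b3)^2 = (a1*b2-a2*b1)^2 + (a1*b3-a3*b1)^2 + (a2*b3-a3*b2)^2"
    by algebra
  moreover have "(a1*b2-a2*b1)^2 + (a1*b3-a3*b1)^2 + (a2*b3-a3*b2)^2 \<ge> 0" by simp
  ultimately show ?thesis by linarith
qed

lemma timelike_neg:
  fixes u P :: "real^4"
  assumes uu: "mdot u u = -1" and u0: "u$0 > 0" and PP: "mdot P P < 0" and P0: "P$0 > 0"
  shows "mdot u P < 0"
proof -
  define a where "a = u$1*P$1 + u$2*P$2 + u$3*P$3"
  define nu where "nu = (u$1)^2 + (u$2)^2 + (u$3)^2"
  define nP where "nP = (P$1)^2 + (P$2)^2 + (P$3)^2"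
  have e1: "nu = (u$0)^2 - 1" using uu by (simp add: mdot_def sum4 eta_def four_ne nu_def power2_eq_square)
  have e2: "nP < (P$0)^2" using PP by (simp add: mdot_def sum4 eta_def four_ne nP_def power2_eq_square)
  have nu0: "nu \<ge> 0" "nP \<ge> 0" by (simp_all add: nu_def nP_def)
  have "a^2 \<le> nu * nP" unfolding a_def nu_def nP_def by (rule cs3)
  also have "\<dots> \<le> nu * (P$0)^2" using e2 nu0 by (simp add: mult_left_mono)
  also have "\<dots> < (u$0)^2 * (P$0)^2" using e1 P0 by simp
  finally have "a^2 < (u$0 * P$0)^2" by (simp add: power_mult_distrib)
  hence "a < u$0 * P$0" using u0 P0 by (meson power2_less_imp_less mult_pos_pos less_imp_le)
  moreover have "mdot u P = - (u$0 * P$0) + a" by (simp add: mdot_def sum4 eta_def four_ne a_def)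
  ultimately show ?thesis by simp
qed

lemma pt:
  fixes u P x :: "real^4" and J :: "real^4^4" and c :: real
  assumes c_pos: "c > 0" and as: "\<And>\<mu> \<nu>. J $ \<mu> $ \<nu> = - (J $ \<nu> $ \<mu>)"
    and Pft: "future_timelike P" and uS: "(u,\<tau>) \<in> SpHP"
  shows "(\<forall>\<mu>. (flat (spin_vec c P J u))$\<mu> =
           - (1/2) * (\<Sum>\<nu>\<in>UNIV. \<Sum>\<rho>\<in>UNIV. \<Sum>\<sigma>\<in>UNIV.
               eps \<mu> \<nu> \<rho> \<sigma> * u$\<nu> *
               (raise2 (spin_tensor J P x))$\<rho>$\<sigma>))
    \<longleftrightarrow> (\<forall>i j k. wedge3 (flat u) (flat P)
          (iota_contr (u + (1 / (mass c P * c)) *\<^sub>R P)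
                    (spin_tensor J P x)) i j k = 0)"
proof -
  define M where "M = mass c P * c"
  define S where "S = spin_tensor J P x"
  have uu: "mdot u u = -1" and u0: "u$0 > 0" using uS by (auto simp: SpHP_def)
  have PPn: "mdot P P < 0" and P0: "P$0 > 0" using Pft by (auto simp: future_timelike_def)
  have Msq: "M = sqrt (- mdot P P)" using c_pos by (simp add: M_def mass_def)
  have Mpos: "M > 0" using PPn Msq by simp
  hence M0: "M \<noteq> 0" by simp
  have PP': "mdot P P = - (M * M)" using PPn Msq by simp
  have uP: "mdot u P < 0" by (rule timelike_neg[OF uu u0 PPn P0])
  have nz: "M - mdot u P \<noteq> 0" using uP Mpos by simp
  define F where "F m = flat (spin_vec c P J u) $ m" for m
  have Fm: "F m = (PL P J $ m + eta m * (P$m + M*u$m) * (\<Sum>\<nu>\<in>UNIV. u$\<nu> * PL P J $\<nu>) / (M - mdot u P)) / M" for m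
    unfolding F_def using sv0[OF M_def[symmetric] M0 nz PW[of P J], of m]
    by (simp add: spin_vec_def flat_def)
  have c0: "wedge3 (flat u) (flat P) (iota_contr (u + (1/M) *\<^sub>R P) S) 1 2 3 = 0 \<longleftrightarrow> F 0 - hdual u S $ 0 = 0"
    unfolding lin
    apply (rule fin)
    apply (rule pureB0[OF as, where u=u and P=P and x=x, folded S_def])
    apply (rule pureA0[OF as, where u=u and P=P and x=x, folded S_def])
    apply (rule Fm)
    apply (rule uu)
    apply (rule PP')
    apply (rule M0)
    apply (rule nz)
    apply simp
    done
  have c1: "wedge3 (flat u) (flat P) (iota_contr (u + (1/M) *\<^sub>R P) S) 0 2 3 = 0 \<longleftrightarrow> F 1 - hdual u S $ 1 = 0"
    unfolding lin
    apply (rule fin)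
    apply (rule pureB1[OF as, where u=u and P=P and x=x, folded S_def])
    apply (rule pureA1[OF as, where u=u and P=P and x=x, folded S_def])
    apply (rule Fm)
    apply (rule uu)
    apply (rule PP')
    apply (rule M0)
    apply (rule nz)
    apply simp
    done
  have c2: "wedge3 (flat u) (flat P) (iota_contr (u + (1/M) *\<^sub>R P) S) 0 1 3 = 0 \<longleftrightarrow> F 2 - hdual u S $ 2 = 0"
    unfolding lin
    apply (rule fin)
    apply (rule pureB2[OF as, where u=u and P=P and x=x, folded S_def])
    apply (rule pureA2[OF as, where u=u and P=P and x=x, folded S_def])
    apply (rule Fm)
    apply (rule uu)
    apply (rule PP')
    apply (rule M0)
    apply (rule nz)
    apply simp
    done
  have c3: "wedge3 (flat u) (flat P) (iota_contr (u + (1/M) *\<^sub>R P) S) 0 1 2 = 0 \<longleftrightarrow> F 3 - hdual u S $ 3 = 0"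
    unfolding lin
    apply (rule fin)
    apply (rule pureB3[OF as, where u=u and P=P and x=x, folded S_def])
    apply (rule pureA3[OF as, where u=u and P=P and x=x, folded S_def])
    apply (rule Fm)
    apply (rule uu)
    apply (rule PP')
    apply (rule M0)
    apply (rule nz)
    apply simp
    done

  have L: "(\<forall>\<mu>. (flat (spin_vec c P J u))$\<mu> =
           - (1/2) * (\<Sum>\<nu>\<in>UNIV. \<Sum>\<rho>\<in>UNIV. \<Sum>\<sigma>\<in>UNIV.
               eps \<mu> \<nu> \<rho> \<sigma> * u$\<nu> *
               (raise2 (spin_tensor J P x))$\<rho>$\<sigma>)) \<longleftrightarrow> (\<forall>\<mu>. F \<mu> - hdual u S $ \<mu> = 0)"
    by (simp only: F_def hdual_def S_def vec_lambda_beta right_minus_eq)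
  show ?thesis
    apply (subst L)
    apply (subst forall4[of "\<lambda>\<mu>. F \<mu> - hdual u S $ \<mu> = 0"])
    unfolding M_def[symmetric] S_def[symmetric] wedge_all
    using c0 c1 c2 c3 by simp
qed

theorem mainTheorem2:
  fixes c :: real
    and P :: "'g \<Rightarrow> real^4"
    and J :: "'g \<Rightarrow> real^4^4"
    and \<chi>' :: "real^4 \<Rightarrow> real \<Rightarrow> 'g \<Rightarrow> real^4"
  assumes c_pos: "c > 0"
    and J_antisym: "\<And>g \<mu> \<nu>. J g $ \<mu> $ \<nu> = - (J g $ \<nu> $ \<mu>)"
    and P_ft: "\<And>g. future_timelike (P g)"
    and pos: "position_observable P \<chi>'"
  shows "centre_of_spin c P J \<chi>' \<longleftrightarrow>
    (\<forall>u \<tau> g. (u,\<tau>) \<in> SpHP \<longrightarrow>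
       (\<forall>i j k. wedge3 (flat u) (flat (P g))
          (iota_contr (u + (1 / (mass c (P g) * c)) *\<^sub>R P g)
                    (spin_tensor (J g) (P g) (\<chi>' u \<tau> g))) i j k = 0))"
  unfolding centre_of_spin_def
  using pt[OF c_pos J_antisym P_ft] by simp
thm_deps mainTheorem2

end
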